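(* For every $n\geq 2$, let $D_n^2$ be the random variable that chooses independently a pair of trees $T,T'\in\mathcal{T}_n$ and computes $d_{\varphi,2}(T,T')^2$. Under the Yule model its expected value is $$E_Y(D_n^2)=\frac{2n}{n-1}\big(3n^2-10n-1+8(n+1)H_n-4(n+1)H_n^2\big),$$ where $H_n=\sum_{i=1}^n 1/i$ is the $n$-th harmonic number.
   Context: A phylogenetic tree with $n$ leaves is a fully resolved (binary) rooted tree, viewed as a directed graph with arcs pointing away from the root, whose leaves are bijectively labeled by $\{1,\dots,n\}$; $\mathcal{T}_n$ denotes the set of all such trees (up to isomorphism preserving labels). The depth $\delta_T(v)$ of a node $v$ is the number of arcs from the root to $v$. For leaves $i\neq j$, the cophenetic value $\varphi_T(i,j)$ is the depth of the lowest common ancestor of $i$ and $j$; also $\varphi_T(i,i)=\delta_T(i)$. The euclidean cophenetic metric is $d_{\varphi,2}(T_1,T_2)=\sqrt{\sum_{1\le i\le j\le n}(\varphi_{T_1}(i,j)-\varphi_{T_2}(i,j))^2}$. The Yule model gives $T\in\mathcal{T}_n$ probability $P_Y(T)=\frac{2^{n-1}}{n!}\prod_{v}\frac{1}{\ell_T(v)-1}$, the product over internal nodes $v$ of $T$, with $\ell_T(v)$ the number of leaves descending from $v$. The two trees are chosen independently, each with probability $P_Y$. *)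

theory Defs
  imports Complex_Main
begin

text \<open>Unordered trees (trees up to
isomorphism preserving labels) are represented canonically: at every internal
node the left subtree contains the smallest leaf label below that node.\<close>

datatype ptree = Leaf nat | Node ptree ptree

fun leaves :: "ptree \<Rightarrow> nat list" where
  "leaves (Leaf a) = [a]"
| "leaves (Node l r) = leaves l @ leaves r"

fun canonical :: "ptree \<Rightarrow> bool" where
  "canonical (Leaf a) = True"
| "canonical (Node l r) =
     (canonical l \<and> canonical r \<and> Min (set (leaves l)) < Min (set (leaves r)))"

definition phylo_trees :: "nat \<Rightarrow> ptree set" where
  "phylo_trees n = {t. distinct (leaves t) \<and> set (leaves t) = {1..n} \<and> canonical t}"

fun depth :: "ptree \<Rightarrow> nat \<Rightarrow> nat" where
  "depth (Leaf a) i = 0"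
| "depth (Node l r) i =
     (if i \<in> set (leaves l) then Suc (depth l i) else Suc (depth r i))"

fun lca_depth :: "ptree \<Rightarrow> nat \<Rightarrow> nat \<Rightarrow> nat" where
  "lca_depth (Leaf a) i j = 0"
| "lca_depth (Node l r) i j =
     (if i \<in> set (leaves l) \<and> j \<in> set (leaves l) then Suc (lca_depth l i j)
      else if i \<in> set (leaves r) \<and> j \<in> set (leaves r) then Suc (lca_depth r i j)
      else 0)"

definition coph :: "ptree \<Rightarrow> nat \<Rightarrow> nat \<Rightarrow> nat" where
  "coph t i j = (if i = j then depth t i else lca_depth t i j)"

definition d_coph2 :: "nat \<Rightarrow> ptree \<Rightarrow> ptree \<Rightarrow> real" where
  "d_coph2 n T1 T2 =
     sqrt (\<Sum>(i,j)\<in>{(i,j). 1 \<le> i \<and> i \<le> j \<and> j \<le> n}.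
             (real (coph T1 i j) - real (coph T2 i j))^2)"

fun yule_prod :: "ptree \<Rightarrow> real" where
  "yule_prod (Leaf a) = 1"
| "yule_prod (Node l r) =
     (1 / (real (length (leaves (Node l r))) - 1)) * yule_prod l * yule_prod r"

definition yule_prob :: "nat \<Rightarrow> ptree \<Rightarrow> real" where
  "yule_prob n T = 2 ^ (n - 1) / fact n * yule_prod T"

definition expected_D2_yule :: "nat \<Rightarrow> real" where
  "expected_D2_yule n =
     (\<Sum>T1\<in>phylo_trees n. \<Sum>T2\<in>phylo_trees n.
        yule_prob n T1 * yule_prob n T2 * (d_coph2 n T1 T2)^2)"

end

theory Submission
  imports Defs
begin


definition trees :: "nat set \<Rightarrow> ptree set" where
  "trees S = {t. distinct (leaves t) \<and> set (leaves t) = S \<and> canonical t}"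
definition PS :: "nat set \<Rightarrow> nat set set" where
  "PS S = {A. A \<subseteq> S \<and> A \<noteq> {} \<and> A \<noteq> S}"
definition w :: "nat set \<Rightarrow> ptree \<Rightarrow> real" where
  "w S t = 2^(card S - 1) / fact (card S) * yule_prod t"
definition cc :: "nat \<Rightarrow> nat \<Rightarrow> real" where
  "cc n k = 1 / ((real n - 1) * real (n choose k))"

lemma leaves_ne: "leaves t \<noteq> []"
  by (induction t) auto

lemma trees_empty: "trees {} = {}"
  using leaves_ne by (auto simp: trees_def)

lemma trees_single: "trees {a} = {Leaf a}"
proof -
  have "t = Leaf a" if "distinct (leaves t)" "set (leaves t) = {a}" for t
  proof (cases t)
    case (Leaf x) then show ?thesis using that by auto
  next
    case (Node l r)
    obtain x where x: "x \<in> set (leaves l)" using leaves_ne by (metis list.set_sel(1))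
    moreover obtain y where y: "y \<in> set (leaves r)" using leaves_ne by (metis list.set_sel(1))
    have "set (leaves l) \<subseteq> {a}" "set (leaves r) \<subseteq> {a}" using that(2) Node by auto
    then have "x = a" "y = a" using x y by auto
    then show ?thesis using that(1) Node x y by auto
  qed
  then show ?thesis by (auto simp: trees_def)
qed

lemma trees_split:
  assumes "finite S" "2 \<le> card S"
  shows "trees S = (\<lambda>(A,l,r). Node l r) ` (SIGMA A:{A\<in>PS S. Min S \<in> A}. trees A \<times> trees (S - A))"
proof (intro equalityI subsetI)
  fix t assume t: "t \<in> trees S"
  have t': "distinct (leaves t)" "set (leaves t) = S" "canonical t" using t unfolding trees_def by auto
  show "t \<in> (\<lambda>(A,l,r). Node l r) ` (SIGMA A:{A\<in>PS S. Min S \<in> A}. trees A \<times> trees (S - A))"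
  proof (cases t)
    case (Leaf a)
    then have "S = {a}" using t'(2) by simp
    then show ?thesis using assms(2) by simp
  next
    case (Node l r)
    let ?A = "set (leaves l)"
    let ?B = "set (leaves r)"
    have d: "distinct (leaves l)" "distinct (leaves r)" "?A \<inter> ?B = {}"
      using t'(1) Node by simp_all
    have c: "canonical l" "canonical r" "Min ?A < Min ?B" using t'(3) Node by simp_all
    have S: "S = ?A \<union> ?B" using t'(2) Node by simp
    have ne: "?A \<noteq> {}" "?B \<noteq> {}" using leaves_ne by simp_all
    have SA: "S - ?A = ?B" using S d(3) by blast
    have "Min S = min (Min ?A) (Min ?B)" 
      unfolding S using ne Min_Un[of ?A ?B] by simp
    then have "Min S = Min ?A" using c(3) by simp
    then have m: "Min S \<in> ?A" using ne(1) by simp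
    obtain x where x: "x \<in> ?B" using leaves_ne[of r] by (metis list.set_sel(1))
    then have "x \<notin> ?A" using d(3) by auto
    moreover have "x \<in> S" using x S by simp
    ultimately have "?A \<noteq> S" by auto
    moreover have "?A \<subseteq> S" using S by simp
    ultimately have p: "?A \<in> PS S" using ne(1) unfolding PS_def by simp
    have "l \<in> trees ?A" using d(1) c(1) unfolding trees_def by simp
    moreover have "r \<in> trees (S - ?A)" using d(2) c(2) SA unfolding trees_def by simp
    ultimately have "(?A,l,r) \<in> (SIGMA A:{A\<in>PS S. Min S \<in> A}. trees A \<times> trees (S - A))" using m p by simp
    then show ?thesis unfolding Node by (rule rev_image_eqI) simp
  qed
next
  fix t assume "t \<in> (\<lambda>(A,l,r). Node l r) ` (SIGMA A:{A\<in>PS S. Min S \<in> A}. trees A \<times> trees (S - A))"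
  then obtain A l r where t: "t = Node l r" and A: "A \<in> PS S" "Min S \<in> A"
    and l: "l \<in> trees A" and r: "r \<in> trees (S - A)" by auto
  have A': "A \<subseteq> S" "A \<noteq> {}" "A \<noteq> S" using A(1) unfolding PS_def by auto
  have fA: "finite A" using A'(1) assms(1) by (rule finite_subset)
  have fB: "finite (S - A)" using assms(1) by simp
  have neB: "S - A \<noteq> {}" using A' by blast
  have "Min A \<le> Min S" using fA A(2) by (rule Min_le)
  moreover have "Min S \<le> Min A" using A'(1) A'(2) assms(1) by (rule Min_antimono)
  ultimately have m1: "Min A = Min S" by simp
  have "Min S \<le> Min (S - A)" using neB assms(1) by (intro Min_antimono) auto
  moreover have "Min (S - A) \<in> S - A" using fB neB by (rule Min_in)
  then have "Min (S - A) \<noteq> Min S" using A(2) by auto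
  ultimately have m2: "Min A < Min (S - A)" using m1 by simp
  have l': "distinct (leaves l)" "set (leaves l) = A" "canonical l" using l by (auto simp: trees_def)
  have r': "distinct (leaves r)" "set (leaves r) = S - A" "canonical r" using r by (auto simp: trees_def)
  show "t \<in> trees S" unfolding t trees_def using l' r' m2 A'(1) by auto
qed

lemma trees_inj: "inj_on (\<lambda>(A,l,r). Node l r) (SIGMA A:X. trees A \<times> trees (S - A))"
  by (auto simp: inj_on_def trees_def)

lemma trees_finite: "finite S \<Longrightarrow> finite (trees S)"
proof (induction "card S" arbitrary: S rule: less_induct)
  case less
  show ?case
  proof (cases "card S < 2")
    case True
    then have "card S = 0 \<or> card S = 1" by auto
    then show ?thesis using less.prems by (auto simp: card_1_singleton_iff trees_empty trees_single)
  next
    case False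
    have "finite (SIGMA A:{A\<in>PS S. Min S \<in> A}. trees A \<times> trees (S - A))"
    proof (rule finite_SigmaI)
      show "finite {A\<in>PS S. Min S \<in> A}" using less.prems unfolding PS_def by auto
      fix A assume "A \<in> {A\<in>PS S. Min S \<in> A}"
      then have "A \<subset> S" "S - A \<subset> S" "A \<noteq> {}" "S - A \<noteq> {}" unfolding PS_def by auto
      then have "card A < card S" "card (S - A) < card S" "finite A" "finite (S - A)"
        using less.prems by (auto intro: psubset_card_mono finite_subset)
      then show "finite (trees A \<times> trees (S - A))" using less.hyps by auto
    qed
    then show ?thesis using trees_split[OF less.prems] False by simp
  qed
qed



lemma trees_mem: "t \<in> trees S \<Longrightarrow> distinct (leaves t) \<and> set (leaves t) = S \<and> canonical t"
  by (simp add: trees_def)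

lemma trees_card: "t \<in> trees S \<Longrightarrow> length (leaves t) = card S"
  using trees_mem distinct_card by metis

lemma PS_facts:
  assumes "finite S" "A \<in> PS S"
  shows "finite A" "A \<subseteq> S" "card A \<ge> 1" "card A < card S" "card (S - A) = card S - card A"
    "finite (S - A)"
proof -
  have A: "A \<subseteq> S" "A \<noteq> {}" "A \<noteq> S" using assms(2) unfolding PS_def by auto
  show f: "finite A" using A(1) assms(1) by (rule finite_subset)
  show "A \<subseteq> S" by fact
  show "card A \<ge> 1" using f A(2) by (simp add: Suc_leI card_gt_0_iff)
  show "card A < card S" using A assms(1) by (simp add: psubset_card_mono)
  show "card (S - A) = card S - card A" using f A(1) by (rule card_Diff_subset)
  show "finite (S - A)" using assms(1) by simp
qed

lemma w_node:
  assumes S: "finite S" "card S = n" "n \<ge> 2" and A: "A \<in> PS S"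
    and l: "l \<in> trees A" and r: "r \<in> trees (S - A)"
  shows "w S (Node l r) = 2 * cc n (card A) * w A l * w (S - A) r"
proof -
  define k where "k = card A"
  have k: "1 \<le> k" "k < n" "card (S - A) = n - k"
    using PS_facts[OF S(1) A] S(2) unfolding k_def by auto
  have len: "length (leaves (Node l r)) = n"
    using trees_card[of l A] trees_card[of r "S - A"] l r k k_def by simp
  obtain a b where ab: "k = Suc a" "n - k = Suc b" using k
    by (metis Suc_diff_1 zero_less_diff less_le_trans zero_less_one)
  have p2: "(2::real)^(n-1) = 2 * 2^(k-1) * 2^(n-k-1)"
  proof -
    have e: "n - 1 = Suc ((k-1) + (n-k-1))" using ab by simp
    show ?thesis unfolding e power_Suc power_add by simp
  qed
  have bf: "real (n choose k) = fact n / (fact k * fact (n - k))"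
    using k by (simp add: binomial_fact)
  have fpos: "(fact k :: real) \<noteq> 0" "(fact (n-k) :: real) \<noteq> 0" "(fact n :: real) \<noteq> 0" by auto
  have n1: "real n - 1 \<noteq> 0" using S(3) by simp
  have "w S (Node l r) = 2^(n-1) / fact n * (1 / (real n - 1) * yule_prod l * yule_prod r)"
    unfolding w_def using len S(2) by simp
  also have "\<dots> = 2 * cc n k * w A l * w (S - A) r"
    unfolding w_def cc_def bf k_def[symmetric] k(3) p2 using fpos n1
    by (simp add: field_simps)
  finally show ?thesis unfolding k_def .
qed



lemma finite_PS: "finite S \<Longrightarrow> finite (PS S)"
  unfolding PS_def by (rule finite_subset[of _ "Pow S"]) auto

lemma cc_sym: "k \<le> n \<Longrightarrow> cc n (n - k) = cc n k"
  unfolding cc_def using binomial_symmetric[of k n] by simp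

lemma G_sym:
  assumes S: "finite S" "card S = n" and A: "A \<in> PS S"
    and sym: "\<And>l r. l \<in> trees A \<Longrightarrow> r \<in> trees (S - A) \<Longrightarrow> F (Node l r) = F (Node r l)"
  shows "cc n (card (S - A)) * (\<Sum>l\<in>trees (S - A). \<Sum>r\<in>trees (S - (S - A)). w (S - A) l * w (S - (S - A)) r * F (Node l r))
       = cc n (card A) * (\<Sum>l\<in>trees A. \<Sum>r\<in>trees (S - A). w A l * w (S - A) r * F (Node l r))"
proof -
  have As: "A \<subseteq> S" using A unfolding PS_def by auto
  then have e: "S - (S - A) = A" by auto
  have c: "cc n (card (S - A)) = cc n (card A)"
    using PS_facts[OF S(1) A] S(2) cc_sym[of "card A" n] by simp
  have "(\<Sum>l\<in>trees (S - A). \<Sum>r\<in>trees A. w (S - A) l * w A r * F (Node l r))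
      = (\<Sum>r\<in>trees A. \<Sum>l\<in>trees (S - A). w (S - A) l * w A r * F (Node l r))"
    by (rule sum.swap)
  also have "\<dots> = (\<Sum>r\<in>trees A. \<Sum>l\<in>trees (S - A). w A r * w (S - A) l * F (Node r l))"
  proof (intro sum.cong refl)
    fix r l assume "r \<in> trees A" "l \<in> trees (S - A)"
    then show "w (S - A) l * w A r * F (Node l r) = w A r * w (S - A) l * F (Node r l)"
      using sym[of r l] by simp
  qed
  finally show ?thesis unfolding e c by simp
qed

lemma Ex_split:
  assumes S: "finite S" "card S = n" "n \<ge> 2"
    and sym: "\<And>A l r. A \<in> PS S \<Longrightarrow> l \<in> trees A \<Longrightarrow> r \<in> trees (S - A) \<Longrightarrow> F (Node l r) = F (Node r l)"
  shows "(\<Sum>t\<in>trees S. w S t * F t) = (\<Sum>A\<in>PS S. cc n (card A) *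
           (\<Sum>l\<in>trees A. \<Sum>r\<in>trees (S - A). w A l * w (S - A) r * F (Node l r)))"
proof -
  define M where "M = {A\<in>PS S. Min S \<in> A}"
  define G where "G A = cc n (card A) * (\<Sum>l\<in>trees A. \<Sum>r\<in>trees (S - A). w A l * w (S - A) r * F (Node l r))" for A
  have fPS: "finite (PS S)" using S(1) by (rule finite_PS)
  have fM: "finite M" unfolding M_def using fPS by simp
  have MPS: "M \<subseteq> PS S" unfolding M_def by auto
  have fT: "finite (trees A)" if "A \<in> PS S" for A
    using PS_facts[OF S(1) that] trees_finite by auto
  have fT2: "finite (trees (S - A))" for A
    using S(1) trees_finite by auto
  have "(\<Sum>t\<in>trees S. w S t * F t) = (\<Sum>(A,l,r)\<in>(SIGMA A:M. trees A \<times> trees (S-A)). w S (Node l r) * F (Node l r))"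
    unfolding trees_split[OF S(1) S(3)[folded S(2)]] M_def[symmetric]
    by (subst sum.reindex[OF trees_inj]) (simp add: case_prod_unfold)
  also have "\<dots> = (\<Sum>A\<in>M. \<Sum>(l,r)\<in>trees A \<times> trees (S-A). w S (Node l r) * F (Node l r))"
    by (rule sum.Sigma[symmetric]) (use fM fT fT2 MPS in auto)
  also have "\<dots> = (\<Sum>A\<in>M. 2 * G A)"
  proof (rule sum.cong[OF refl])
    fix A assume "A \<in> M"
    then have A: "A \<in> PS S" unfolding M_def by simp
    have "(\<Sum>(l,r)\<in>trees A \<times> trees (S-A). w S (Node l r) * F (Node l r))
       = (\<Sum>l\<in>trees A. \<Sum>r\<in>trees (S-A). w S (Node l r) * F (Node l r))"
      by (rule sum.cartesian_product[symmetric])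
    also have "\<dots> = (\<Sum>l\<in>trees A. \<Sum>r\<in>trees (S-A). 2 * cc n (card A) * (w A l * w (S - A) r * F (Node l r)))"
      by (intro sum.cong refl) (simp add: w_node[OF S A])
    also have "\<dots> = 2 * G A" unfolding G_def by (simp add: sum_distrib_left mult.assoc)
    finally show "(\<Sum>(l,r)\<in>trees A \<times> trees (S-A). w S (Node l r) * F (Node l r)) = 2 * G A" .
  qed
  also have "\<dots> = (\<Sum>A\<in>M. G A) + (\<Sum>A\<in>PS S - M. G A)"
  proof -
    have "(\<Sum>A\<in>PS S - M. G A) = (\<Sum>A\<in>M. G A)"
    proof (rule sum.reindex_bij_witness[where i="\<lambda>A. S - A" and j="\<lambda>A. S - A"])
      fix A assume A: "A \<in> PS S - M"
      then show "S - (S - A) = A" unfolding PS_def by auto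
      have ne: "S \<noteq> {}" using S by auto
      have "Min S \<in> S" using S(1) ne by simp
      then show "S - A \<in> M" using A unfolding M_def PS_def by auto
      show "G (S - A) = G A" unfolding G_def
        by (rule G_sym[OF S(1) S(2)]) (use A sym in auto)
    next
      fix A assume A: "A \<in> M"
      then show "S - (S - A) = A" unfolding M_def PS_def by auto
      show "S - A \<in> PS S - M" using A unfolding M_def PS_def by auto
    qed
    moreover have "(\<Sum>A\<in>M. 2 * G A) = 2 * (\<Sum>A\<in>M. G A)" by (rule sum_distrib_left[symmetric])
    ultimately show ?thesis by linarith
  qed
  also have "\<dots> = (\<Sum>A\<in>PS S. G A)"
    using sum.subset_diff[OF MPS fPS, of G] by simp
  finally show ?thesis unfolding G_def .
qed



lemma count_sub:
  fixes h :: "nat \<Rightarrow> real"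
  assumes fT: "finite T"
  shows "(\<Sum>B\<in>{B. B \<subseteq> T \<and> B \<noteq> T}. h (card B)) = (\<Sum>k<card T. real (card T choose k) * h k)"
proof -
  let ?Q = "{B. B \<subseteq> T \<and> B \<noteq> T}"
  have "?Q \<subseteq> Pow T" by auto
  then have fQ: "finite ?Q" by (rule finite_subset) (simp add: fT)
  have im: "card ` ?Q \<subseteq> {..<card T}"
  proof
    fix x assume "x \<in> card ` ?Q"
    then obtain B where B: "B \<subseteq> T" "B \<noteq> T" "x = card B" by auto
    then have "B \<subset> T" by auto
    then have "card B < card T" by (rule psubset_card_mono[OF fT])
    then show "x \<in> {..<card T}" using B by simp
  qed
  have "(\<Sum>B\<in>?Q. h (card B)) = (\<Sum>k<card T. \<Sum>B\<in>{B. B \<in> ?Q \<and> card B = k}. h (card B))"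
    by (rule sum.group[symmetric, OF fQ _ im]) simp
  also have "\<dots> = (\<Sum>k<card T. real (card T choose k) * h k)"
  proof (rule sum.cong[OF refl])
    fix k assume k: "k \<in> {..<card T}"
    have e: "{B. B \<in> ?Q \<and> card B = k} = {B. B \<subseteq> T \<and> card B = k}" using k by fastforce
    show "(\<Sum>B\<in>{B. B \<in> ?Q \<and> card B = k}. h (card B)) = real (card T choose k) * h k"
      unfolding e using n_subsets[OF fT, of k] by simp
  qed
  finally show ?thesis .
qed

lemma count1:
  fixes h :: "nat \<Rightarrow> real"
  assumes S: "finite S" "card S = n" and i: "i \<in> S"
  shows "(\<Sum>A\<in>PS S. if i \<in> A then h (card A) else 0) = (\<Sum>k<n-1. real ((n-1) choose k) * h (k+1))"
proof -
  let ?T = "S - {i}"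
  have fP: "finite (PS S)" using S(1) by (rule finite_PS)
  have cT: "card ?T = n - 1" using S i by simp
  have "(\<Sum>A\<in>PS S. if i \<in> A then h (card A) else 0) = (\<Sum>A\<in>{A\<in>PS S. i \<in> A}. h (card A))"
    by (rule sum.inter_filter[symmetric, OF fP])
  also have "\<dots> = (\<Sum>B\<in>{B. B \<subseteq> ?T \<and> B \<noteq> ?T}. h (card B + 1))"
  proof (rule sum.reindex_bij_witness[where i="insert i" and j="\<lambda>A. A - {i}"])
    fix A assume A: "A \<in> {A\<in>PS S. i \<in> A}"
    then show "insert i (A - {i}) = A" by auto
    show "A - {i} \<in> {B. B \<subseteq> ?T \<and> B \<noteq> ?T}" using A unfolding PS_def by auto
    have "finite A" using A S(1) unfolding PS_def by (auto intro: finite_subset)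
    then show "h (card (A - {i}) + 1) = h (card A)" using A
      by (metis (mono_tags, lifting) card_Diff1_less_iff card_Suc_Diff1 Suc_eq_plus1 mem_Collect_eq)
  next
    fix B assume B: "B \<in> {B. B \<subseteq> ?T \<and> B \<noteq> ?T}"
    then show "insert i B - {i} = B" by auto
    show "insert i B \<in> {A\<in>PS S. i \<in> A}" using B i unfolding PS_def by auto
  qed
  also have "\<dots> = (\<Sum>k<n-1. real ((n-1) choose k) * h (k+1))"
    using count_sub[of ?T "\<lambda>k. h (k+1)"] S(1) cT by simp
  finally show ?thesis .
qed

lemma count2:
  fixes h :: "nat \<Rightarrow> real"
  assumes S: "finite S" "card S = n" and i: "i \<in> S" "j \<in> S" "i \<noteq> j"
  shows "(\<Sum>A\<in>PS S. if i \<in> A \<and> j \<in> A then h (card A) else 0) = (\<Sum>k<n-2. real ((n-2) choose k) * h (k+2))"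
proof -
  let ?T = "S - {i,j}"
  have fP: "finite (PS S)" using S(1) by (rule finite_PS)
  have cT: "card ?T = n - 2" using S i by (simp add: card_Diff_subset)
  have "(\<Sum>A\<in>PS S. if i \<in> A \<and> j \<in> A then h (card A) else 0) = (\<Sum>A\<in>{A\<in>PS S. i \<in> A \<and> j \<in> A}. h (card A))"
    by (rule sum.inter_filter[symmetric, OF fP])
  also have "\<dots> = (\<Sum>B\<in>{B. B \<subseteq> ?T \<and> B \<noteq> ?T}. h (card B + 2))"
  proof (rule sum.reindex_bij_witness[where i="\<lambda>B. insert i (insert j B)" and j="\<lambda>A. A - {i,j}"])
    fix A assume A: "A \<in> {A\<in>PS S. i \<in> A \<and> j \<in> A}"
    then show "insert i (insert j (A - {i,j})) = A" by auto
    show "A - {i,j} \<in> {B. B \<subseteq> ?T \<and> B \<noteq> ?T}" using A unfolding PS_def by auto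
    have "finite A" using A S(1) unfolding PS_def by (auto intro: finite_subset)
    then have "card (A - {i,j}) = card A - 2" using A i(3) by (simp add: card_Diff_subset)
    moreover have "card A \<ge> 2"
    proof -
      have "{i,j} \<subseteq> A" using A by auto
      then have "card {i,j} \<le> card A" using \<open>finite A\<close> by (rule card_mono[rotated])
      then show ?thesis using i(3) by simp
    qed
    ultimately have "card (A - {i,j}) + 2 = card A" by arith
    then show "h (card (A - {i,j}) + 2) = h (card A)" by simp
  next
    fix B assume B: "B \<in> {B. B \<subseteq> ?T \<and> B \<noteq> ?T}"
    then show "insert i (insert j B) - {i,j} = B" by auto
    show "insert i (insert j B) \<in> {A\<in>PS S. i \<in> A \<and> j \<in> A}" using B i unfolding PS_def by auto
  qed
  also have "\<dots> = (\<Sum>k<n-2. real ((n-2) choose k) * h (k+2))"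
    using count_sub[of ?T "\<lambda>k. h (k+2)"] S(1) cT by simp
  finally show ?thesis .
qed



lemma PS_diff: "A \<in> PS S \<Longrightarrow> S - A \<in> PS S"
  unfolding PS_def by auto

lemma PS_dd: "A \<in> PS S \<Longrightarrow> S - (S - A) = A"
  unfolding PS_def by (simp add: double_diff)

lemma PS_compl: "finite S \<Longrightarrow> (\<Sum>A\<in>PS S. f A) = (\<Sum>A\<in>PS S. f (S - A))"
  by (rule sum.reindex_bij_witness[where i="\<lambda>A. S - A" and j="\<lambda>A. S - A"])
     (simp_all add: PS_diff PS_dd)

lemma coef1:
  assumes "n \<ge> 2" "k < n - 1"
  shows "real (n - 1 choose k) * cc n (k+1) = (real k + 1) / (real n * (real n - 1))"
proof -
  obtain m where n: "n = Suc m" using assms by (cases n) auto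
  have e0: "Suc m * (m choose k) = (Suc m choose Suc k) * Suc k" by (rule Suc_times_binomial_eq)
  have e: "real n * real (m choose k) = real (n choose (k+1)) * (real k + 1)"
    using arg_cong[OF e0, of real] unfolding n by (simp only: of_nat_mult of_nat_Suc Suc_eq_plus1 of_nat_add of_nat_1)
  have p: "real (n choose (k+1)) \<noteq> 0" using assms by simp
  have nm: "n - 1 = m" "n - Suc 0 = m" using n by simp_all
  have n1: "real n - 1 \<noteq> 0" "real n \<noteq> 0" using assms by auto
  have "real (n - 1 choose k) * cc n (k+1) = (real n * real (m choose k)) / (real n * (real n - 1) * real (n choose (k+1)))"
    unfolding cc_def using n1 p by (simp add: field_simps nm)
  also have "\<dots> = (real (n choose (k+1)) * (real k + 1)) / (real n * (real n - 1) * real (n choose (k+1)))"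
    by (simp only: e)
  also have "\<dots> = (real k + 1) / (real n * (real n - 1))" using p n1 by (simp add: field_simps)
  finally show ?thesis .
qed

lemma coef2:
  assumes "n \<ge> 2" "k < n - 2"
  shows "real (n - 2 choose k) * cc n (k+2) = (real k + 2) * (real k + 1) / (real n * (real n - 1)^2)"
proof -
  obtain m where n: "n = Suc (Suc m)" using assms by (metis add_2_eq_Suc le_Suc_ex)
  have e0: "Suc m * (m choose k) = (Suc m choose Suc k) * Suc k" by (rule Suc_times_binomial_eq)
  have e1: "Suc (Suc m) * (Suc m choose Suc k) = (Suc (Suc m) choose Suc (Suc k)) * Suc (Suc k)"
    by (rule Suc_times_binomial_eq)
  have e: "real n * (real n - 1) * real (m choose k) = real (n choose (k+2)) * (real k + 2) * (real k + 1)"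
  proof -
    have "real n * (real n - 1) * real (m choose k) = real (Suc (Suc m)) * (real (Suc m) * real (m choose k))"
      unfolding n by simp
    also have "\<dots> = real (Suc (Suc m)) * real (Suc m choose Suc k) * (real k + 1)"
      using arg_cong[OF e0, of real] by (simp only: of_nat_mult of_nat_Suc mult.assoc add.commute)
    also have "\<dots> = real (n choose (k+2)) * (real k + 2) * (real k + 1)"
    proof -
      have e1r: "real (Suc (Suc m)) * real (Suc m choose Suc k) = real (n choose (k+2)) * (real k + 2)"
        using arg_cong[OF e1, of real] unfolding n by (simp del: binomial_Suc_Suc add: algebra_simps)
      show ?thesis unfolding e1r ..
    qed
    finally show ?thesis .
  qed
  have p: "real (n choose (k+2)) \<noteq> 0" using assms by simp
  have nm: "n - 2 = m" "n - Suc (Suc 0) = m" using n by simp_all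
  have n1: "real n - 1 \<noteq> 0" "real n \<noteq> 0" using assms by auto
  have "real (n - 2 choose k) * cc n (k+2) = (real n * (real n - 1) * real (m choose k)) / (real n * (real n - 1)^2 * real (n choose (k+2)))"
  proof -
    have aux: "a / (y * C) = (x * y * a) / (x * y^2 * C)" if "x \<noteq> 0" "y \<noteq> 0" "C \<noteq> 0" for a x y C :: real
      using that by (simp add: power2_eq_square)
    show ?thesis unfolding cc_def nm using aux[OF n1(2) n1(1) p] by simp
  qed
  also have "\<dots> = (real (n choose (k+2)) * (real k + 2) * (real k + 1)) / (real n * (real n - 1)^2 * real (n choose (k+2)))"
    by (simp only: e)
  also have "\<dots> = (real k + 2) * (real k + 1) / (real n * (real n - 1)^2)" using p n1 by (simp add: field_simps)
  finally show ?thesis .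
qed



lemma split1:
  fixes X :: "nat \<Rightarrow> real"
  assumes S: "finite S" "card S = n" "n \<ge> 2" "i \<in> S"
  shows "(\<Sum>A\<in>PS S. cc n (card A) * (if i \<in> A then X (card A) else X (n - card A)))
       = (\<Sum>k<n-1. 2 * ((real k + 1) / (real n * (real n - 1))) * X (k+1))"
proof -
  define a where "a A = (if i \<in> A then cc n (card A) * X (card A) else 0)" for A
  define b where "b A = (if i \<in> A then 0 else cc n (card A) * X (n - card A))" for A
  have 1: "(\<Sum>A\<in>PS S. cc n (card A) * (if i \<in> A then X (card A) else X (n - card A)))
         = (\<Sum>A\<in>PS S. a A) + (\<Sum>A\<in>PS S. b A)"
    unfolding sum.distrib[symmetric] by (rule sum.cong) (auto simp: a_def b_def)
  have "(\<Sum>A\<in>PS S. b A) = (\<Sum>A\<in>PS S. b (S - A))" by (rule PS_compl[OF S(1)])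
  also have "\<dots> = (\<Sum>A\<in>PS S. a A)"
  proof (rule sum.cong[OF refl])
    fix A assume A: "A \<in> PS S"
    have c: "card (S - A) = n - card A" "card A \<le> n" using PS_facts[OF S(1) A] S(2) by auto
    then have c2: "n - card (S - A) = card A" by simp
    have cs: "cc n (card (S - A)) = cc n (card A)" using c cc_sym by simp
    show "b (S - A) = a A" unfolding a_def b_def using S(4) c2 cs by auto
  qed
  finally have 2: "(\<Sum>A\<in>PS S. b A) = (\<Sum>A\<in>PS S. a A)" .
  have 3: "(\<Sum>A\<in>PS S. a A) = (\<Sum>k<n-1. real (n-1 choose k) * (cc n (k+1) * X (k+1)))"
    using count1[OF S(1) S(2) S(4), of "\<lambda>k. cc n k * X k"] unfolding a_def by simp
  have 4: "\<dots> = (\<Sum>k<n-1. ((real k + 1) / (real n * (real n - 1))) * X (k+1))"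
  proof (rule sum.cong[OF refl])
    fix k assume "k \<in> {..<n-1}"
    then have "real (n - 1 choose k) * cc n (k+1) = (real k + 1) / (real n * (real n - 1))"
      using coef1[OF S(3)] by simp
    then show "real (n-1 choose k) * (cc n (k+1) * X (k+1)) = ((real k + 1) / (real n * (real n - 1))) * X (k+1)"
      by (simp add: mult.assoc[symmetric])
  qed
  have 5: "(\<Sum>k<n-1. 2 * ((real k + 1) / (real n * (real n - 1))) * X (k+1))
     = 2 * (\<Sum>k<n-1. ((real k + 1) / (real n * (real n - 1))) * X (k+1))"
    by (simp only: sum_distrib_left mult.assoc)
  show ?thesis unfolding 1 2 3 4 5 by simp
qed

lemma split2:
  fixes Y :: "nat \<Rightarrow> real"
  assumes S: "finite S" "card S = n" "n \<ge> 2" "i \<in> S" "j \<in> S" "i \<noteq> j"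
  shows "(\<Sum>A\<in>PS S. cc n (card A) * (if i \<in> A \<and> j \<in> A then Y (card A)
            else if i \<notin> A \<and> j \<notin> A then Y (n - card A) else 0))
       = (\<Sum>k<n-2. 2 * ((real k + 2) * (real k + 1) / (real n * (real n - 1)^2)) * Y (k+2))"
proof -
  define a where "a A = (if i \<in> A \<and> j \<in> A then cc n (card A) * Y (card A) else 0)" for A
  define b where "b A = (if i \<notin> A \<and> j \<notin> A then cc n (card A) * Y (n - card A) else 0)" for A
  have 1: "(\<Sum>A\<in>PS S. cc n (card A) * (if i \<in> A \<and> j \<in> A then Y (card A)
            else if i \<notin> A \<and> j \<notin> A then Y (n - card A) else 0))
         = (\<Sum>A\<in>PS S. a A) + (\<Sum>A\<in>PS S. b A)"
    unfolding sum.distrib[symmetric] by (rule sum.cong) (auto simp: a_def b_def)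
  have "(\<Sum>A\<in>PS S. b A) = (\<Sum>A\<in>PS S. b (S - A))" by (rule PS_compl[OF S(1)])
  also have "\<dots> = (\<Sum>A\<in>PS S. a A)"
  proof (rule sum.cong[OF refl])
    fix A assume A: "A \<in> PS S"
    have c: "card (S - A) = n - card A" "card A \<le> n" using PS_facts[OF S(1) A] S(2) by auto
    then have c2: "n - card (S - A) = card A" by simp
    have cs: "cc n (card (S - A)) = cc n (card A)" using c cc_sym by simp
    show "b (S - A) = a A" unfolding a_def b_def using S(4,5) c2 cs by auto
  qed
  finally have 2: "(\<Sum>A\<in>PS S. b A) = (\<Sum>A\<in>PS S. a A)" .
  have 3: "(\<Sum>A\<in>PS S. a A) = (\<Sum>k<n-2. real (n-2 choose k) * (cc n (k+2) * Y (k+2)))"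
    using count2[OF S(1) S(2) S(4) S(5) S(6), of "\<lambda>k. cc n k * Y k"] unfolding a_def by simp
  have 4: "\<dots> = (\<Sum>k<n-2. ((real k + 2) * (real k + 1) / (real n * (real n - 1)^2)) * Y (k+2))"
  proof (rule sum.cong[OF refl])
    fix k assume "k \<in> {..<n-2}"
    then have "real (n - 2 choose k) * cc n (k+2) = (real k + 2) * (real k + 1) / (real n * (real n - 1)^2)"
      using coef2[OF S(3)] by simp
    then show "real (n-2 choose k) * (cc n (k+2) * Y (k+2)) = ((real k + 2) * (real k + 1) / (real n * (real n - 1)^2)) * Y (k+2)"
      by (simp add: mult.assoc[symmetric])
  qed
  have 5: "(\<Sum>k<n-2. 2 * ((real k + 2) * (real k + 1) / (real n * (real n - 1)^2)) * Y (k+2))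
     = 2 * (\<Sum>k<n-2. ((real k + 2) * (real k + 1) / (real n * (real n - 1)^2)) * Y (k+2))"
    by (simp only: sum_distrib_left mult.assoc)
  show ?thesis unfolding 1 2 3 4 5 by simp
qed



definition HH :: "nat \<Rightarrow> real" where "HH n = (\<Sum>i=1..n. 1 / real i)"
definition HH2 :: "nat \<Rightarrow> real" where "HH2 n = (\<Sum>i=1..n. 1 / (real i)^2)"

lemma HH_Suc: "HH (Suc n) = HH n + 1 / (real n + 1)"
  unfolding HH_def by (simp add: add.commute)
lemma HH2_Suc: "HH2 (Suc n) = HH2 n + 1 / (real n + 1)^2"
  unfolding HH2_def by (simp add: add.commute)
lemma HH_1: "HH 1 = 1" unfolding HH_def by simp
lemma HH2_1: "HH2 1 = 1" unfolding HH2_def by simp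
lemma HH_2: "HH 2 = 3/2" unfolding HH_def by (simp add: numeral_2_eq_2)
lemma HH2_2: "HH2 2 = 5/4" unfolding HH2_def by (simp add: numeral_2_eq_2)
lemma HH_2': "HH (Suc (Suc 0)) = 3/2" using HH_2 by (simp add: numeral_2_eq_2)
lemma HH2_2': "HH2 (Suc (Suc 0)) = 5/4" using HH2_2 by (simp add: numeral_2_eq_2)

definition Aq :: "nat \<Rightarrow> real" where "Aq n = 2 * (HH n - 1)"
definition A2q :: "nat \<Rightarrow> real" where "A2q n = 4 * (HH n)^2 - 4 * HH2 n - 6 * HH n + 6"
definition Uq :: "nat \<Rightarrow> real" where "Uq n = 2 * real n + 2 - 4 * HH n"
definition Vq :: "nat \<Rightarrow> real" where "Vq n = 10 * real n - 6 - 4 * HH n - 8 * (HH n)^2 + 8 * HH2 n"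

lemma SP: "(\<Sum>k<m. 2 * (real k + 1)) = (real m + 1) * real m"
  by (induction m) (auto simp: algebra_simps)

lemma SA: "(\<Sum>k<m. 2 * ((real k + 1) * (1 + Aq (k+1)))) = (real m + 1) * real m * Aq (m+1)"
proof (induction m)
  case 0 show ?case by simp
next
  case (Suc m)
  have e: "Aq (Suc m + 1) = Aq (m+1) + 2 / (real m + 2)"
    unfolding Aq_def using HH_Suc[of "m+1"] by (simp add: algebra_simps)
  have p: "real m + 2 \<noteq> 0" by simp
  show ?case unfolding sum.lessThan_Suc Suc.IH e using p by (simp add: field_simps)
qed

lemma SA2: "(\<Sum>k<m. 2 * ((real k + 1) * (1 + 2 * Aq (k+1) + A2q (k+1)))) = (real m + 1) * real m * A2q (m+1)"
proof (induction m)
  case 0 show ?case by simp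
next
  case (Suc m)
  define h where "h = HH (m+1)"
  define h2 where "h2 = HH2 (m+1)"
  have e1: "Aq (m+1) = 2 * (h - 1)" unfolding Aq_def h_def ..
  have e2: "A2q (m+1) = 4 * h^2 - 4 * h2 - 6 * h + 6" unfolding A2q_def h_def h2_def ..
  have e3: "A2q (Suc m + 1) = 4 * (h + 1/(real m + 2))^2 - 4 * (h2 + 1/(real m + 2)^2) - 6 * (h + 1/(real m + 2)) + 6"
  proof -
    have a: "HH (Suc m + 1) = h + 1/(real m + 2)" using HH_Suc[of "m+1"] unfolding h_def by simp
    have b: "HH2 (Suc m + 1) = h2 + 1/(real m + 2)^2" using HH2_Suc[of "m+1"] unfolding h2_def by simp
    show ?thesis unfolding A2q_def a b ..
  qed
  have p: "real m + 2 \<noteq> 0" by simp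
  have d: "A2q (Suc m + 1) = A2q (m+1) + (8*h - 6) / (real m + 2)"
  proof -
    define t where "t = 1 / (real m + 2)"
    have t2: "1 / (real m + 2)^2 = t^2" unfolding t_def by (simp add: power_one_over)
    have "A2q (Suc m + 1) = A2q (m+1) + (8*h - 6) * t"
      unfolding e3 e2 t2 t_def[symmetric] by (simp add: algebra_simps power2_eq_square)
    then show ?thesis unfolding t_def by simp
  qed
  show ?case unfolding sum.lessThan_Suc Suc.IH d e1 using p
    by (simp add: field_simps)
qed

lemma SB: "(\<Sum>k<m. 2 * ((real k + 2) * (real k + 1) + (real k + 2) * Uq (k+2))) = (real m + 2) * (real m + 1) * Uq (m+2)"
proof (induction m)
  case 0 show ?case by (simp add: Uq_def HH_2 HH_2')
next
  case (Suc m)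
  have e: "Uq (Suc m + 2) = Uq (m+2) + 2 - 4 / (real m + 3)"
    unfolding Uq_def using HH_Suc[of "m+2"] by (simp add: algebra_simps)
  have p: "real m + 3 \<noteq> 0" by simp
  show ?case unfolding sum.lessThan_Suc Suc.IH e using p by (simp add: field_simps)
qed

lemma SB2: "(\<Sum>k<m. 2 * ((real k + 2) * (real k + 1) + 2 * (real k + 2) * Uq (k+2) + (real k + 2) * Vq (k+2)))
   = (real m + 2) * (real m + 1) * Vq (m+2)"
proof (induction m)
  case 0 show ?case by (simp add: Vq_def HH_2 HH2_2 HH_2' HH2_2' power2_eq_square)
next
  case (Suc m)
  define h where "h = HH (m+2)"
  define h2 where "h2 = HH2 (m+2)"
  have e1: "Uq (m+2) = 2 * (real m + 2) + 2 - 4 * h" unfolding Uq_def h_def by simp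
  have e2: "Vq (m+2) = 10 * (real m + 2) - 6 - 4 * h - 8 * h^2 + 8 * h2" unfolding Vq_def h_def h2_def by simp
  have e3: "Vq (Suc m + 2) = 10 * (real m + 3) - 6 - 4 * (h + 1/(real m + 3)) - 8 * (h + 1/(real m + 3))^2 + 8 * (h2 + 1/(real m + 3)^2)"
  proof -
    have a: "HH (Suc m + 2) = h + 1/(real m + 3)" using HH_Suc[of "m+2"] unfolding h_def by simp
    have b: "HH2 (Suc m + 2) = h2 + 1/(real m + 3)^2" using HH2_Suc[of "m+2"] unfolding h2_def by simp
    show ?thesis unfolding Vq_def a b by simp
  qed
  have p: "real m + 3 \<noteq> 0" by simp
  have d: "Vq (Suc m + 2) = Vq (m+2) + 10 - (4 + 16 * h) / (real m + 3)"
  proof -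
    define t where "t = 1 / (real m + 3)"
    have t2: "1 / (real m + 3)^2 = t^2" unfolding t_def by (simp add: power_one_over)
    have "Vq (Suc m + 2) = Vq (m+2) + 10 - (4 + 16 * h) * t"
      unfolding e3 e2 t2 t_def[symmetric] by (simp add: algebra_simps power2_eq_square)
    then show ?thesis unfolding t_def by simp
  qed
  show ?case unfolding sum.lessThan_Suc Suc.IH d e1 using p
    by (simp add: field_simps)
qed



lemma dsum_l: "(\<Sum>l\<in>L. \<Sum>r\<in>R. f l * g r * h l) = (\<Sum>l\<in>L. f l * h l) * (\<Sum>r\<in>R. g r :: real)"
  unfolding sum_product by (intro sum.cong refl) (simp add: mult_ac)
lemma dsum_r: "(\<Sum>l\<in>L. \<Sum>r\<in>R. f l * g r * h r) = (\<Sum>l\<in>L. f l) * (\<Sum>r\<in>R. g r * h r :: real)"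
  unfolding sum_product by (intro sum.cong refl) (simp add: mult_ac)

lemma conv1: "(\<Sum>k<m. 2 * ((real k + 1) / D) * f k) = (\<Sum>k<m. 2 * ((real k + 1) * f k)) / D"
  unfolding sum_divide_distrib by (intro sum.cong refl) (simp add: algebra_simps)
lemma conv2: "(\<Sum>k<m. 2 * ((real k + 2) * (real k + 1) / D) * f k) = (\<Sum>k<m. 2 * ((real k + 2) * (real k + 1) * f k)) / D"
  unfolding sum_divide_distrib by (intro sum.cong refl) (simp add: algebra_simps)

lemma card_ge2: "finite S \<Longrightarrow> S \<noteq> {} \<Longrightarrow> \<not> card S < 2 \<Longrightarrow> card S \<ge> 2" by simp

lemma PS_sub:
  assumes "finite S" "A \<in> PS S"
  shows "A \<noteq> {}" "S - A \<noteq> {}" "card A < card S" "card (S - A) < card S" "finite A" "finite (S - A)"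
proof -
  have A: "A \<subseteq> S" "A \<noteq> {}" "A \<noteq> S" using assms(2) unfolding PS_def by auto
  show "A \<noteq> {}" "S - A \<noteq> {}" using A by auto
  show "card A < card S" using PS_facts[OF assms] by simp
  show "finite A" "finite (S - A)" using PS_facts[OF assms] by simp_all
  show "card (S - A) < card S" using PS_facts[OF assms] by simp
qed

lemma P1: "finite S \<Longrightarrow> S \<noteq> {} \<Longrightarrow> (\<Sum>t\<in>trees S. w S t) = 1"
proof (induction "card S" arbitrary: S rule: less_induct)
  case less
  show ?case
  proof (cases "card S < 2")
    case True
    moreover have "card S \<noteq> 0" using less.prems by simp
    ultimately have "card S = 1" by linarith
    then obtain a where "S = {a}" by (auto simp: card_1_singleton_iff)
    then show ?thesis by (simp add: trees_single w_def)
  next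
    case False
    define n where "n = card S"
    have n2: "n \<ge> 2" using False n_def by simp
    obtain i where i: "i \<in> S" using less.prems by auto
    have "(\<Sum>t\<in>trees S. w S t) = (\<Sum>t\<in>trees S. w S t * (\<lambda>_. 1::real) t)" by simp
    also have "\<dots> = (\<Sum>A\<in>PS S. cc n (card A) *
           (\<Sum>l\<in>trees A. \<Sum>r\<in>trees (S - A). w A l * w (S - A) r * 1))"
      by (rule Ex_split[OF less.prems(1) n_def[symmetric] n2]) simp
    also have "\<dots> = (\<Sum>A\<in>PS S. cc n (card A) * (if i \<in> A then (\<lambda>_. 1::real) (card A) else (\<lambda>_. 1) (n - card A)))"
    proof (rule sum.cong[OF refl])
      fix A assume A: "A \<in> PS S"
      note q = PS_sub[OF less.prems(1) A]
      have "(\<Sum>l\<in>trees A. \<Sum>r\<in>trees (S - A). w A l * w (S - A) r * 1) = (\<Sum>l\<in>trees A. w A l * 1) * (\<Sum>r\<in>trees (S - A). w (S - A) r)"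
        by (rule dsum_l)
      also have "\<dots> = 1" using less.hyps[OF q(3) q(5) q(1)] less.hyps[OF q(4) q(6) q(2)] by simp
      finally show "cc n (card A) * (\<Sum>l\<in>trees A. \<Sum>r\<in>trees (S - A). w A l * w (S - A) r * 1)
          = cc n (card A) * (if i \<in> A then (\<lambda>_. 1::real) (card A) else (\<lambda>_. 1) (n - card A))" by simp
    qed
    also have "\<dots> = (\<Sum>k<n-1. 2 * ((real k + 1) / (real n * (real n - 1))) * (\<lambda>_. 1::real) (k+1))"
      by (rule split1[OF less.prems(1) n_def[symmetric] n2 i])
    also have "\<dots> = 1"
    proof -
      have "(\<Sum>k<n-1. 2 * ((real k + 1) * (\<lambda>_. 1::real) (k+1))) = real n * (real n - 1)"
        using SP[of "n-1"] n2 by (simp add: of_nat_diff)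
      moreover have "real n * (real n - 1) \<noteq> 0" using n2 by simp
      ultimately show ?thesis unfolding conv1 by simp
    qed
    finally show ?thesis .
  qed
qed



lemma tree_leaves: "t \<in> trees S \<Longrightarrow> set (leaves t) = S"
  by (simp add: trees_def)

lemma depth_sym:
  assumes "A \<in> PS S" "l \<in> trees A" "r \<in> trees (S - A)" "i \<in> S"
  shows "depth (Node l r) i = depth (Node r l) i"
  using assms tree_leaves[OF assms(2)] tree_leaves[OF assms(3)] by auto

lemma lca_sym:
  assumes "A \<in> PS S" "l \<in> trees A" "r \<in> trees (S - A)"
  shows "lca_depth (Node l r) i j = lca_depth (Node r l) i j"
  using assms tree_leaves[OF assms(2)] tree_leaves[OF assms(3)] by auto

lemma single_case:
  assumes "finite S" "i \<in> S" "card S < 2"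
  shows "S = {i}"
proof -
  have "card S \<noteq> 0" using assms by auto
  then have "card S = 1" using assms(3) by linarith
  then obtain a where "S = {a}" by (auto simp: card_1_singleton_iff)
  then show ?thesis using assms(2) by simp
qed

lemma sum_w_f:
  assumes "finite A" "A \<noteq> {}"
  shows "(\<Sum>l\<in>trees A. w A l * (1 + f l)) = 1 + (\<Sum>l\<in>trees A. w A l * f l)"
  using P1[OF assms] by (simp add: algebra_simps sum.distrib)

lemma sum_sq_expand:
  fixes w d :: "'a \<Rightarrow> real"
  shows "(\<Sum>l\<in>L. w l * (1 + (2 * d l + d l^2))) = (\<Sum>l\<in>L. w l) + 2 * (\<Sum>l\<in>L. w l * d l) + (\<Sum>l\<in>L. w l * d l^2)"
proof -
  have "(\<Sum>l\<in>L. w l * (1 + (2 * d l + d l^2))) = (\<Sum>l\<in>L. w l + 2 * (w l * d l) + w l * d l^2)"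
    by (intro sum.cong refl) (simp add: algebra_simps)
  also have "\<dots> = (\<Sum>l\<in>L. w l) + (\<Sum>l\<in>L. 2 * (w l * d l)) + (\<Sum>l\<in>L. w l * d l^2)"
    by (simp add: sum.distrib)
  also have "(\<Sum>l\<in>L. 2 * (w l * d l)) = 2 * (\<Sum>l\<in>L. w l * d l)" by (rule sum_distrib_left[symmetric])
  finally show ?thesis .
qed

lemma M1: "finite S \<Longrightarrow> i \<in> S \<Longrightarrow> (\<Sum>t\<in>trees S. w S t * real (depth t i)) = Aq (card S)"
proof (induction "card S" arbitrary: S rule: less_induct)
  case less
  show ?case
  proof (cases "card S < 2")
    case True
    then have "S = {i}" using single_case[OF less.prems(1) less.prems(2) True] by simp
    then show ?thesis by (simp add: trees_single Aq_def HH_def)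
  next
    case False
    define n where "n = card S"
    have n2: "n \<ge> 2" using False n_def by simp
    have "(\<Sum>t\<in>trees S. w S t * real (depth t i)) = (\<Sum>A\<in>PS S. cc n (card A) *
           (\<Sum>l\<in>trees A. \<Sum>r\<in>trees (S - A). w A l * w (S - A) r * real (depth (Node l r) i)))"
      by (rule Ex_split[OF less.prems(1) n_def[symmetric] n2]) (metis depth_sym less.prems(2))
    also have "\<dots> = (\<Sum>A\<in>PS S. cc n (card A) * (if i \<in> A then (\<lambda>k. 1 + Aq k) (card A) else (\<lambda>k. 1 + Aq k) (n - card A)))"
    proof (rule sum.cong[OF refl])
      fix A assume A: "A \<in> PS S"
      note q = PS_sub[OF less.prems(1) A]
      have cB: "card (S - A) = n - card A" using PS_facts[OF less.prems(1) A] n_def by simp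
      have "(\<Sum>l\<in>trees A. \<Sum>r\<in>trees (S - A). w A l * w (S - A) r * real (depth (Node l r) i))
          = (if i \<in> A then 1 + Aq (card A) else 1 + Aq (n - card A))"
      proof (cases "i \<in> A")
        case True
        have "(\<Sum>l\<in>trees A. \<Sum>r\<in>trees (S - A). w A l * w (S - A) r * real (depth (Node l r) i))
            = (\<Sum>l\<in>trees A. \<Sum>r\<in>trees (S - A). w A l * w (S - A) r * (1 + real (depth l i)))"
          by (intro sum.cong refl) (simp add: tree_leaves True)
        also have "\<dots> = (\<Sum>l\<in>trees A. w A l * (1 + real (depth l i))) * (\<Sum>r\<in>trees (S - A). w (S - A) r)"
          by (rule dsum_l)
        also have "\<dots> = 1 + Aq (card A)"
          using sum_w_f[OF q(5) q(1)] less.hyps[OF q(3) q(5) True] P1[OF q(6) q(2)] by simp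
        finally show ?thesis using True by simp
      next
        case False
        then have iB: "i \<in> S - A" using less.prems(2) by simp
        have "(\<Sum>l\<in>trees A. \<Sum>r\<in>trees (S - A). w A l * w (S - A) r * real (depth (Node l r) i))
            = (\<Sum>l\<in>trees A. \<Sum>r\<in>trees (S - A). w A l * w (S - A) r * (1 + real (depth r i)))"
          by (intro sum.cong refl) (simp add: tree_leaves False)
        also have "\<dots> = (\<Sum>l\<in>trees A. w A l) * (\<Sum>r\<in>trees (S - A). w (S - A) r * (1 + real (depth r i)))"
          by (rule dsum_r)
        also have "\<dots> = 1 + Aq (n - card A)"
          using sum_w_f[OF q(6) q(2)] less.hyps[OF q(4) q(6) iB] P1[OF q(5) q(1)] cB by simp
        finally show ?thesis using False by simp
      qed
      then show "cc n (card A) * (\<Sum>l\<in>trees A. \<Sum>r\<in>trees (S - A). w A l * w (S - A) r * real (depth (Node l r) i))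
          = cc n (card A) * (if i \<in> A then (\<lambda>k. 1 + Aq k) (card A) else (\<lambda>k. 1 + Aq k) (n - card A))" by simp
    qed
    also have "\<dots> = (\<Sum>k<n-1. 2 * ((real k + 1) / (real n * (real n - 1))) * (\<lambda>k. 1 + Aq k) (k+1))"
      by (rule split1[OF less.prems(1) n_def[symmetric] n2 less.prems(2)])
    also have "\<dots> = Aq n"
    proof -
      have "(\<Sum>k<n-1. 2 * ((real k + 1) * (\<lambda>k. 1 + Aq k) (k+1))) = real n * (real n - 1) * Aq n"
        using SA[of "n-1"] n2 by (simp add: of_nat_diff)
      moreover have "real n * (real n - 1) \<noteq> 0" using n2 by simp
      ultimately show ?thesis unfolding conv1 by simp
    qed
    finally show ?thesis unfolding n_def .
  qed
qed

lemma M2: "finite S \<Longrightarrow> i \<in> S \<Longrightarrow> (\<Sum>t\<in>trees S. w S t * real (depth t i)^2) = A2q (card S)"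
proof (induction "card S" arbitrary: S rule: less_induct)
  case less
  show ?case
  proof (cases "card S < 2")
    case True
    then have "S = {i}" using single_case[OF less.prems(1) less.prems(2) True] by simp
    then show ?thesis by (simp add: trees_single A2q_def HH_def HH2_def)
  next
    case False
    define n where "n = card S"
    have n2: "n \<ge> 2" using False n_def by simp
    have "(\<Sum>t\<in>trees S. w S t * real (depth t i)^2) = (\<Sum>A\<in>PS S. cc n (card A) *
           (\<Sum>l\<in>trees A. \<Sum>r\<in>trees (S - A). w A l * w (S - A) r * real (depth (Node l r) i)^2))"
      by (rule Ex_split[OF less.prems(1) n_def[symmetric] n2]) (metis depth_sym less.prems(2))
    also have "\<dots> = (\<Sum>A\<in>PS S. cc n (card A) * (if i \<in> A then (\<lambda>k. 1 + 2 * Aq k + A2q k) (card A) else (\<lambda>k. 1 + 2 * Aq k + A2q k) (n - card A)))"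
    proof (rule sum.cong[OF refl])
      fix A assume A: "A \<in> PS S"
      note q = PS_sub[OF less.prems(1) A]
      have cB: "card (S - A) = n - card A" using PS_facts[OF less.prems(1) A] n_def by simp
      have "(\<Sum>l\<in>trees A. \<Sum>r\<in>trees (S - A). w A l * w (S - A) r * real (depth (Node l r) i)^2)
          = (if i \<in> A then 1 + 2 * Aq (card A) + A2q (card A) else 1 + 2 * Aq (n - card A) + A2q (n - card A))"
      proof (cases "i \<in> A")
        case True
        have "(\<Sum>l\<in>trees A. \<Sum>r\<in>trees (S - A). w A l * w (S - A) r * real (depth (Node l r) i)^2)
            = (\<Sum>l\<in>trees A. \<Sum>r\<in>trees (S - A). w A l * w (S - A) r * (1 + (2 * real (depth l i) + real (depth l i)^2)))"
          by (intro sum.cong refl) (simp add: tree_leaves True power2_eq_square algebra_simps)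
        also have "\<dots> = (\<Sum>l\<in>trees A. w A l * (1 + (2 * real (depth l i) + real (depth l i)^2))) * (\<Sum>r\<in>trees (S - A). w (S - A) r)"
          by (rule dsum_l)
        also have "\<dots> = 1 + 2 * Aq (card A) + A2q (card A)"
          using sum_sq_expand[of "w A" "\<lambda>l. real (depth l i)" "trees A"] P1[OF q(5) q(1)]
            less.hyps[OF q(3) q(5) True] P1[OF q(6) q(2)] M1[OF q(5) True] by simp
        finally show ?thesis using True by simp
      next
        case False
        then have iB: "i \<in> S - A" using less.prems(2) by simp
        have "(\<Sum>l\<in>trees A. \<Sum>r\<in>trees (S - A). w A l * w (S - A) r * real (depth (Node l r) i)^2)
            = (\<Sum>l\<in>trees A. \<Sum>r\<in>trees (S - A). w A l * w (S - A) r * (1 + (2 * real (depth r i) + real (depth r i)^2)))"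
          by (intro sum.cong refl) (simp add: tree_leaves False power2_eq_square algebra_simps)
        also have "\<dots> = (\<Sum>l\<in>trees A. w A l) * (\<Sum>r\<in>trees (S - A). w (S - A) r * (1 + (2 * real (depth r i) + real (depth r i)^2)))"
          by (rule dsum_r)
        also have "\<dots> = 1 + 2 * Aq (n - card A) + A2q (n - card A)"
          using sum_sq_expand[of "w (S - A)" "\<lambda>l. real (depth l i)" "trees (S - A)"] P1[OF q(6) q(2)]
            less.hyps[OF q(4) q(6) iB] P1[OF q(5) q(1)] M1[OF q(6) iB] cB by simp
        finally show ?thesis using False by simp
      qed
      then show "cc n (card A) * (\<Sum>l\<in>trees A. \<Sum>r\<in>trees (S - A). w A l * w (S - A) r * real (depth (Node l r) i)^2)
          = cc n (card A) * (if i \<in> A then (\<lambda>k. 1 + 2 * Aq k + A2q k) (card A) else (\<lambda>k. 1 + 2 * Aq k + A2q k) (n - card A))" by simp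
    qed
    also have "\<dots> = (\<Sum>k<n-1. 2 * ((real k + 1) / (real n * (real n - 1))) * (\<lambda>k. 1 + 2 * Aq k + A2q k) (k+1))"
      by (rule split1[OF less.prems(1) n_def[symmetric] n2 less.prems(2)])
    also have "\<dots> = A2q n"
    proof -
      have "(\<Sum>k<n-1. 2 * ((real k + 1) * (\<lambda>k. 1 + 2 * Aq k + A2q k) (k+1))) = real n * (real n - 1) * A2q n"
        using SA2[of "n-1"] n2 by (simp add: of_nat_diff)
      moreover have "real n * (real n - 1) \<noteq> 0" using n2 by simp
      ultimately show ?thesis unfolding conv1 by simp
    qed
    finally show ?thesis unfolding n_def .
  qed
qed



definition Bq :: "nat \<Rightarrow> real" where "Bq n = Uq n / (real n - 1)"
definition B2q :: "nat \<Rightarrow> real" where "B2q n = Vq n / (real n - 1)"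

lemma card2: assumes "finite S" "i \<in> S" "j \<in> S" "i \<noteq> j" shows "card S \<ge> 2"
proof -
  have "card {i,j} \<le> card S" using assms by (intro card_mono) auto
  then show ?thesis using assms(4) by simp
qed

lemma lca_cases:
  assumes l: "l \<in> trees A" and r: "r \<in> trees (S - A)" and ij: "i \<in> S" "j \<in> S"
  shows "lca_depth (Node l r) i j = (if i \<in> A \<and> j \<in> A then Suc (lca_depth l i j)
      else if i \<notin> A \<and> j \<notin> A then Suc (lca_depth r i j) else 0)"
  using tree_leaves[OF l] tree_leaves[OF r] ij by auto

lemma L1: "finite S \<Longrightarrow> i \<in> S \<Longrightarrow> j \<in> S \<Longrightarrow> i \<noteq> j \<Longrightarrow>
    (\<Sum>t\<in>trees S. w S t * real (lca_depth t i j)) = Bq (card S)"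
proof (induction "card S" arbitrary: S rule: less_induct)
  case less
  define n where "n = card S"
  have n2: "n \<ge> 2" using card2[OF less.prems] n_def by simp
  have "(\<Sum>t\<in>trees S. w S t * real (lca_depth t i j)) = (\<Sum>A\<in>PS S. cc n (card A) *
         (\<Sum>l\<in>trees A. \<Sum>r\<in>trees (S - A). w A l * w (S - A) r * real (lca_depth (Node l r) i j)))"
    by (rule Ex_split[OF less.prems(1) n_def[symmetric] n2]) (metis lca_sym)
  also have "\<dots> = (\<Sum>A\<in>PS S. cc n (card A) * (if i \<in> A \<and> j \<in> A then (\<lambda>k. 1 + Bq k) (card A)
            else if i \<notin> A \<and> j \<notin> A then (\<lambda>k. 1 + Bq k) (n - card A) else 0))"
  proof (rule sum.cong[OF refl])
    fix A assume A: "A \<in> PS S"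
    note q = PS_sub[OF less.prems(1) A]
    have cB: "card (S - A) = n - card A" using PS_facts[OF less.prems(1) A] n_def by simp
    have "(\<Sum>l\<in>trees A. \<Sum>r\<in>trees (S - A). w A l * w (S - A) r * real (lca_depth (Node l r) i j))
        = (if i \<in> A \<and> j \<in> A then 1 + Bq (card A) else if i \<notin> A \<and> j \<notin> A then 1 + Bq (n - card A) else 0)"
    proof (cases "i \<in> A \<and> j \<in> A")
      case True
      have "(\<Sum>l\<in>trees A. \<Sum>r\<in>trees (S - A). w A l * w (S - A) r * real (lca_depth (Node l r) i j))
          = (\<Sum>l\<in>trees A. \<Sum>r\<in>trees (S - A). w A l * w (S - A) r * (1 + real (lca_depth l i j)))"
        by (intro sum.cong refl) (simp add: lca_cases[OF _ _ less.prems(2,3)] True del: lca_depth.simps)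
      also have "\<dots> = (\<Sum>l\<in>trees A. w A l * (1 + real (lca_depth l i j))) * (\<Sum>r\<in>trees (S - A). w (S - A) r)"
        by (rule dsum_l)
      also have "\<dots> = 1 + Bq (card A)"
        using sum_w_f[OF q(5) q(1)] True less.hyps[OF q(3) q(5) _ _ less.prems(4)] P1[OF q(6) q(2)] by simp
      finally show ?thesis using True by simp
    next
      case F1: False
      show ?thesis
      proof (cases "i \<notin> A \<and> j \<notin> A")
        case True
        then have iB: "i \<in> S - A" "j \<in> S - A" using less.prems(2,3) by auto
        have "(\<Sum>l\<in>trees A. \<Sum>r\<in>trees (S - A). w A l * w (S - A) r * real (lca_depth (Node l r) i j))
            = (\<Sum>l\<in>trees A. \<Sum>r\<in>trees (S - A). w A l * w (S - A) r * (1 + real (lca_depth r i j)))"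
          by (intro sum.cong refl) (simp add: lca_cases[OF _ _ less.prems(2,3)] True del: lca_depth.simps)
        also have "\<dots> = (\<Sum>l\<in>trees A. w A l) * (\<Sum>r\<in>trees (S - A). w (S - A) r * (1 + real (lca_depth r i j)))"
          by (rule dsum_r)
        also have "\<dots> = 1 + Bq (n - card A)"
          using sum_w_f[OF q(6) q(2)] less.hyps[OF q(4) q(6) iB less.prems(4)] P1[OF q(5) q(1)] cB by simp
        finally show ?thesis using True by simp
      next
        case False
        have "(\<Sum>l\<in>trees A. \<Sum>r\<in>trees (S - A). w A l * w (S - A) r * real (lca_depth (Node l r) i j)) = 0"
          by (intro sum.neutral ballI) (simp add: lca_cases[OF _ _ less.prems(2,3)] F1 False del: lca_depth.simps)
        then show ?thesis by (simp only: if_not_P[OF F1] if_not_P[OF False])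
      qed
    qed
    then show "cc n (card A) * (\<Sum>l\<in>trees A. \<Sum>r\<in>trees (S - A). w A l * w (S - A) r * real (lca_depth (Node l r) i j))
        = cc n (card A) * (if i \<in> A \<and> j \<in> A then (\<lambda>k. 1 + Bq k) (card A)
            else if i \<notin> A \<and> j \<notin> A then (\<lambda>k. 1 + Bq k) (n - card A) else 0)" by simp
  qed
  also have "\<dots> = (\<Sum>k<n-2. 2 * ((real k + 2) * (real k + 1) / (real n * (real n - 1)^2)) * (\<lambda>k. 1 + Bq k) (k+2))"
    by (rule split2[OF less.prems(1) n_def[symmetric] n2 less.prems(2-4)])
  also have "\<dots> = Bq n"
  proof -
    have "(\<Sum>k<n-2. 2 * ((real k + 2) * (real k + 1) * (\<lambda>k. 1 + Bq k) (k+2)))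
        = (\<Sum>k<n-2. 2 * ((real k + 2) * (real k + 1) + (real k + 2) * Uq (k+2)))"
    proof (intro sum.cong refl)
      fix k
      have "real (k+2) - 1 = real k + 1" by simp
      moreover have "real k + 1 \<noteq> 0" by simp
      ultimately show "2 * ((real k + 2) * (real k + 1) * (\<lambda>k. 1 + Bq k) (k+2)) = 2 * ((real k + 2) * (real k + 1) + (real k + 2) * Uq (k+2))"
        unfolding Bq_def by (simp add: field_simps)
    qed
    also have "\<dots> = real n * (real n - 1) * Uq n"
    proof -
      have nn: "Suc (Suc (n - 2)) = n" using n2 by simp
      show ?thesis using SB[of "n-2"] n2 by (simp add: of_nat_diff nn)
    qed
    finally have e: "(\<Sum>k<n-2. 2 * ((real k + 2) * (real k + 1) * (\<lambda>k. 1 + Bq k) (k+2))) = real n * (real n - 1) * Uq n" .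
    have "real n * (real n - 1) \<noteq> 0" "real n - 1 \<noteq> 0" using n2 by auto
    then have "(real n * (real n - 1) * Uq n) / (real n * (real n - 1)^2) = Bq n"
      unfolding Bq_def by (simp add: power2_eq_square)
    then show ?thesis unfolding conv2 e .
  qed
  finally show ?case unfolding n_def .
qed

lemma L2: "finite S \<Longrightarrow> i \<in> S \<Longrightarrow> j \<in> S \<Longrightarrow> i \<noteq> j \<Longrightarrow>
    (\<Sum>t\<in>trees S. w S t * real (lca_depth t i j)^2) = B2q (card S)"
proof (induction "card S" arbitrary: S rule: less_induct)
  case less
  define n where "n = card S"
  have n2: "n \<ge> 2" using card2[OF less.prems] n_def by simp
  have "(\<Sum>t\<in>trees S. w S t * real (lca_depth t i j)^2) = (\<Sum>A\<in>PS S. cc n (card A) *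
         (\<Sum>l\<in>trees A. \<Sum>r\<in>trees (S - A). w A l * w (S - A) r * real (lca_depth (Node l r) i j)^2))"
    by (rule Ex_split[OF less.prems(1) n_def[symmetric] n2]) (metis lca_sym)
  also have "\<dots> = (\<Sum>A\<in>PS S. cc n (card A) * (if i \<in> A \<and> j \<in> A then (\<lambda>k. 1 + 2 * Bq k + B2q k) (card A)
            else if i \<notin> A \<and> j \<notin> A then (\<lambda>k. 1 + 2 * Bq k + B2q k) (n - card A) else 0))"
  proof (rule sum.cong[OF refl])
    fix A assume A: "A \<in> PS S"
    note q = PS_sub[OF less.prems(1) A]
    have cB: "card (S - A) = n - card A" using PS_facts[OF less.prems(1) A] n_def by simp
    have "(\<Sum>l\<in>trees A. \<Sum>r\<in>trees (S - A). w A l * w (S - A) r * real (lca_depth (Node l r) i j)^2)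
        = (if i \<in> A \<and> j \<in> A then 1 + 2 * Bq (card A) + B2q (card A) else if i \<notin> A \<and> j \<notin> A then 1 + 2 * Bq (n - card A) + B2q (n - card A) else 0)"
    proof (cases "i \<in> A \<and> j \<in> A")
      case True
      have "(\<Sum>l\<in>trees A. \<Sum>r\<in>trees (S - A). w A l * w (S - A) r * real (lca_depth (Node l r) i j)^2)
          = (\<Sum>l\<in>trees A. \<Sum>r\<in>trees (S - A). w A l * w (S - A) r * (1 + (2 * real (lca_depth l i j) + real (lca_depth l i j)^2)))"
        by (intro sum.cong refl) (simp add: lca_cases[OF _ _ less.prems(2,3)] True power2_eq_square algebra_simps del: lca_depth.simps)
      also have "\<dots> = (\<Sum>l\<in>trees A. w A l * (1 + (2 * real (lca_depth l i j) + real (lca_depth l i j)^2))) * (\<Sum>r\<in>trees (S - A). w (S - A) r)"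
        by (rule dsum_l)
      also have "\<dots> = 1 + 2 * Bq (card A) + B2q (card A)"
        using sum_sq_expand[of "w A" "\<lambda>l. real (lca_depth l i j)" "trees A"] P1[OF q(5) q(1)]
          True less.hyps[OF q(3) q(5) _ _ less.prems(4)] P1[OF q(6) q(2)] L1[OF q(5) _ _ less.prems(4)] by simp
      finally show ?thesis using True by simp
    next
      case F1: False
      show ?thesis
      proof (cases "i \<notin> A \<and> j \<notin> A")
        case True
        then have iB: "i \<in> S - A" "j \<in> S - A" using less.prems(2,3) by auto
        have "(\<Sum>l\<in>trees A. \<Sum>r\<in>trees (S - A). w A l * w (S - A) r * real (lca_depth (Node l r) i j)^2)
            = (\<Sum>l\<in>trees A. \<Sum>r\<in>trees (S - A). w A l * w (S - A) r * (1 + (2 * real (lca_depth r i j) + real (lca_depth r i j)^2)))"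
          by (intro sum.cong refl) (simp add: lca_cases[OF _ _ less.prems(2,3)] True power2_eq_square algebra_simps del: lca_depth.simps)
        also have "\<dots> = (\<Sum>l\<in>trees A. w A l) * (\<Sum>r\<in>trees (S - A). w (S - A) r * (1 + (2 * real (lca_depth r i j) + real (lca_depth r i j)^2)))"
          by (rule dsum_r)
        also have "\<dots> = 1 + 2 * Bq (n - card A) + B2q (n - card A)"
          using sum_sq_expand[of "w (S - A)" "\<lambda>l. real (lca_depth l i j)" "trees (S - A)"] P1[OF q(6) q(2)]
            less.hyps[OF q(4) q(6) iB less.prems(4)] P1[OF q(5) q(1)] L1[OF q(6) iB less.prems(4)] cB by simp
        finally show ?thesis using True by simp
      next
        case False
        have "(\<Sum>l\<in>trees A. \<Sum>r\<in>trees (S - A). w A l * w (S - A) r * real (lca_depth (Node l r) i j)^2) = 0"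
          by (intro sum.neutral ballI) (simp add: lca_cases[OF _ _ less.prems(2,3)] F1 False del: lca_depth.simps)
        then show ?thesis by (simp only: if_not_P[OF F1] if_not_P[OF False])
      qed
    qed
    then show "cc n (card A) * (\<Sum>l\<in>trees A. \<Sum>r\<in>trees (S - A). w A l * w (S - A) r * real (lca_depth (Node l r) i j)^2)
        = cc n (card A) * (if i \<in> A \<and> j \<in> A then (\<lambda>k. 1 + 2 * Bq k + B2q k) (card A)
            else if i \<notin> A \<and> j \<notin> A then (\<lambda>k. 1 + 2 * Bq k + B2q k) (n - card A) else 0)" by simp
  qed
  also have "\<dots> = (\<Sum>k<n-2. 2 * ((real k + 2) * (real k + 1) / (real n * (real n - 1)^2)) * (\<lambda>k. 1 + 2 * Bq k + B2q k) (k+2))"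
    by (rule split2[OF less.prems(1) n_def[symmetric] n2 less.prems(2-4)])
  also have "\<dots> = B2q n"
  proof -
    have "(\<Sum>k<n-2. 2 * ((real k + 2) * (real k + 1) * (\<lambda>k. 1 + 2 * Bq k + B2q k) (k+2)))
        = (\<Sum>k<n-2. 2 * ((real k + 2) * (real k + 1) + 2 * (real k + 2) * Uq (k+2) + (real k + 2) * Vq (k+2)))"
    proof (intro sum.cong refl)
      fix k
      have "real (k+2) - 1 = real k + 1" by simp
      moreover have "real k + 1 \<noteq> 0" by simp
      ultimately show "2 * ((real k + 2) * (real k + 1) * (\<lambda>k. 1 + 2 * Bq k + B2q k) (k+2)) = 2 * ((real k + 2) * (real k + 1) + 2 * (real k + 2) * Uq (k+2) + (real k + 2) * Vq (k+2))"
      proof -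
        have aux: "y * x * (1 + 2 * (U / x) + V / x) = y * x + 2 * y * U + y * V" if "x \<noteq> 0" for x y U V :: real
          using that by (simp add: field_simps)
        show ?thesis unfolding Bq_def B2q_def \<open>real (k+2) - 1 = real k + 1\<close>
          using aux[OF \<open>real k + 1 \<noteq> 0\<close>, of "real k + 2" "Uq (k+2)" "Vq (k+2)"] by simp
      qed
    qed
    also have "\<dots> = real n * (real n - 1) * Vq n"
    proof -
      have nn: "Suc (Suc (n - 2)) = n" using n2 by simp
      show ?thesis using SB2[of "n-2"] n2 by (simp add: of_nat_diff nn)
    qed
    finally have e: "(\<Sum>k<n-2. 2 * ((real k + 2) * (real k + 1) * (\<lambda>k. 1 + 2 * Bq k + B2q k) (k+2))) = real n * (real n - 1) * Vq n" .
    have "real n * (real n - 1) \<noteq> 0" "real n - 1 \<noteq> 0" using n2 by auto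
    then have "(real n * (real n - 1) * Vq n) / (real n * (real n - 1)^2) = B2q n"
      unfolding B2q_def by (simp add: power2_eq_square)
    then show ?thesis unfolding conv2 e .
  qed
  finally show ?case unfolding n_def .
qed



lemma var_lemma:
  fixes p x :: "'a \<Rightarrow> real"
  assumes "(\<Sum>a\<in>T. p a) = 1"
  shows "(\<Sum>a\<in>T. \<Sum>b\<in>T. p a * p b * (x a - x b)^2) = 2 * (\<Sum>a\<in>T. p a * (x a)^2) - 2 * (\<Sum>a\<in>T. p a * x a)^2"
proof -
  define F where "F a = p a * (x a)^2" for a
  define K where "K a = p a * x a" for a
  have "(\<Sum>a\<in>T. \<Sum>b\<in>T. p a * p b * (x a - x b)^2)
      = (\<Sum>a\<in>T. \<Sum>b\<in>T. (F a * p b + p a * F b) - 2 * (K a * K b))"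
    unfolding F_def K_def by (intro sum.cong refl) (simp add: power2_eq_square algebra_simps)
  also have "\<dots> = (\<Sum>a\<in>T. \<Sum>b\<in>T. F a * p b + p a * F b) - (\<Sum>a\<in>T. \<Sum>b\<in>T. 2 * (K a * K b))"
    by (simp only: sum_subtractf)
  also have "(\<Sum>a\<in>T. \<Sum>b\<in>T. F a * p b + p a * F b) = (\<Sum>a\<in>T. \<Sum>b\<in>T. F a * p b) + (\<Sum>a\<in>T. \<Sum>b\<in>T. p a * F b)"
    by (simp only: sum.distrib)
  also have "(\<Sum>a\<in>T. \<Sum>b\<in>T. F a * p b) = sum F T * sum p T" by (rule sum_product[symmetric])
  also have "(\<Sum>a\<in>T. \<Sum>b\<in>T. p a * F b) = sum p T * sum F T" by (rule sum_product[symmetric])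
  also have "(\<Sum>a\<in>T. \<Sum>b\<in>T. 2 * (K a * K b)) = 2 * (\<Sum>a\<in>T. \<Sum>b\<in>T. K a * K b)"
    by (simp add: sum_distrib_left)
  also have "(\<Sum>a\<in>T. \<Sum>b\<in>T. K a * K b) = sum K T * sum K T" by (rule sum_product[symmetric])
  finally show ?thesis using assms unfolding F_def K_def by (simp add: power2_eq_square)
qed

lemma gauss_sum:
  assumes "i \<le> n"
  shows "(\<Sum>j\<in>{i..n}. if i = j then (a::real) else b) = a + real (n - i) * b"
proof -
  have e: "{i..n} = insert i {i<..n}" using assms by auto
  have "(\<Sum>j\<in>{i<..n}. if i = j then a else b) = (\<Sum>j\<in>{i<..n}. b)" by (intro sum.cong refl) auto
  then show ?thesis unfolding e by simp
qed

lemma gauss2: "(\<Sum>i=1..n. real (n - i)) = real n * (real n - 1) / 2"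
proof (induction n)
  case 0 show ?case by simp
next
  case (Suc n)
  have "(\<Sum>i=1..Suc n. real (Suc n - i)) = (\<Sum>i=1..n. real (Suc n - i))" by simp
  also have "\<dots> = (\<Sum>i=1..n. real (n - i) + 1)" by (intro sum.cong refl) (simp add: Suc_diff_le)
  also have "\<dots> = real n * (real n - 1) / 2 + real n" using Suc.IH by (simp add: sum.distrib)
  finally show ?case by (simp add: field_simps)
qed

lemma final_alg:
  fixes x y h h2 :: real
  assumes "y \<noteq> 0" "x = y + 1"
  shows "x * (2 * ((4 * h^2 - 4 * h2 - 6 * h + 6) - (2 * (h - 1))^2))
    + x * y / 2 * (2 * ((10 * x - 6 - 4 * h - 8 * h^2 + 8 * h2) / y - ((2 * x + 2 - 4 * h) / y)^2))
    = 2 * x / y * (3 * x^2 - 10 * x - 1 + 8 * (x + 1) * h - 4 * (x + 1) * h^2)"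
  using assms(1) unfolding assms(2) by (simp add: field_simps power2_eq_square)



lemma swap3:
  fixes f :: "'a \<Rightarrow> 'b \<Rightarrow> real"
  shows "(\<Sum>a\<in>A. \<Sum>b\<in>B. f a b * (\<Sum>q\<in>Q. g a b q)) = (\<Sum>q\<in>Q. \<Sum>a\<in>A. \<Sum>b\<in>B. f a b * g a b q)"
proof -
  have "(\<Sum>a\<in>A. \<Sum>b\<in>B. f a b * (\<Sum>q\<in>Q. g a b q)) = (\<Sum>a\<in>A. \<Sum>b\<in>B. \<Sum>q\<in>Q. f a b * g a b q)"
    by (simp add: sum_distrib_left)
  also have "\<dots> = (\<Sum>a\<in>A. \<Sum>q\<in>Q. \<Sum>b\<in>B. f a b * g a b q)"
    by (rule sum.cong[OF refl], rule sum.swap)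
  also have "\<dots> = (\<Sum>q\<in>Q. \<Sum>a\<in>A. \<Sum>b\<in>B. f a b * g a b q)" by (rule sum.swap)
  finally show ?thesis .
qed

theorem theorem2:
  fixes n :: nat
  assumes "n \<ge> 2"
  defines "H \<equiv> (\<Sum>i=1..n. 1 / real i)"
  shows "expected_D2_yule n =
    2 * real n / (real n - 1) *
      (3 * (real n)^2 - 10 * real n - 1 + 8 * (real n + 1) * H - 4 * (real n + 1) * H^2)"
proof -
  define S where "S = {1..n}"
  have fS: "finite S" and cS: "card S = n" and neS: "S \<noteq> {}" unfolding S_def using assms by auto
  define P where "P = {(i,j). 1 \<le> i \<and> i \<le> j \<and> j \<le> (n::nat)}"
  define T where "T = trees S"
  define D where "D t1 t2 q = (case q of (i,j) \<Rightarrow> (real (coph t1 i j) - real (coph t2 i j))^2)" for t1 t2 q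
  have pt: "phylo_trees n = T" unfolding phylo_trees_def T_def trees_def S_def ..
  have yp: "yule_prob n t = w S t" for t unfolding yule_prob_def w_def cS ..
  have d2: "(d_coph2 n t1 t2)^2 = (\<Sum>q\<in>P. D t1 t2 q)" for t1 t2
    unfolding d_coph2_def D_def P_def
    by (rule real_sqrt_pow2, rule sum_nonneg) (auto split: prod.splits)
  have PS: "P = Sigma {1..n} (\<lambda>i. {i..n})" unfolding P_def by auto
  have fP: "finite P" unfolding PS by simp
  define al where "al = 2 * (A2q n - (Aq n)^2)"
  define be where "be = 2 * (B2q n - (Bq n)^2)"
  have inner: "(\<Sum>t1\<in>T. \<Sum>t2\<in>T. w S t1 * w S t2 * D t1 t2 q) = (case q of (i,j) \<Rightarrow> if i = j then al else be)"
    if q: "q \<in> P" for q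
  proof -
    obtain i j where ij: "q = (i,j)" "1 \<le> i" "i \<le> j" "j \<le> n" using q unfolding P_def by auto
    have iS: "i \<in> S" "j \<in> S" using ij unfolding S_def by auto
    have "(\<Sum>t1\<in>T. \<Sum>t2\<in>T. w S t1 * w S t2 * D t1 t2 q)
        = 2 * (\<Sum>t\<in>T. w S t * (real (coph t i j))^2) - 2 * (\<Sum>t\<in>T. w S t * real (coph t i j))^2"
      unfolding D_def ij(1) using var_lemma[of "w S" T "\<lambda>t. real (coph t i j)"] P1[OF fS neS]
      unfolding T_def by simp
    also have "\<dots> = (if i = j then al else be)"
    proof (cases "i = j")
      case True
      then show ?thesis unfolding coph_def al_def T_def using M1[OF fS iS(1)] M2[OF fS iS(1)] cS by simp
    next
      case False
      then show ?thesis unfolding coph_def be_def T_def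
        using L1[OF fS iS False] L2[OF fS iS False] cS by simp
    qed
    finally show ?thesis unfolding ij(1) by simp
  qed
  have "expected_D2_yule n = (\<Sum>t1\<in>T. \<Sum>t2\<in>T. w S t1 * w S t2 * (\<Sum>q\<in>P. D t1 t2 q))"
    unfolding expected_D2_yule_def pt yp d2 ..
  also have "\<dots> = (\<Sum>q\<in>P. \<Sum>t1\<in>T. \<Sum>t2\<in>T. w S t1 * w S t2 * D t1 t2 q)" by (rule swap3)
  also have "\<dots> = (\<Sum>q\<in>P. case q of (i,j) \<Rightarrow> if i = j then al else be)"
    by (rule sum.cong[OF refl]) (rule inner)
  also have "\<dots> = (\<Sum>i\<in>{1..n}. \<Sum>j\<in>{i..n}. if i = j then al else be)"
    unfolding PS by (rule sum.Sigma[symmetric]) auto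
  also have "\<dots> = (\<Sum>i\<in>{1..n}. al + real (n - i) * be)"
    by (rule sum.cong[OF refl]) (rule gauss_sum, simp)
  also have "\<dots> = real n * al + (real n * (real n - 1) / 2) * be"
    unfolding sum.distrib sum_distrib_right[symmetric] gauss2 by simp
  also have "\<dots> = 2 * real n / (real n - 1) *
      (3 * (real n)^2 - 10 * real n - 1 + 8 * (real n + 1) * H - 4 * (real n + 1) * H^2)"
  proof -
    have hh: "HH n = H" unfolding HH_def H_def ..
    have y: "real n - 1 \<noteq> 0" using assms by simp
    show ?thesis unfolding al_def be_def A2q_def Aq_def B2q_def Bq_def Uq_def Vq_def hh
      using final_alg[OF y, of "real n" H "HH2 n"] by (simp add: mult.assoc)
  qed
  finally show ?thesis .
qed


end
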